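(* Let $n$ be a positive integer and let $g_k(x)=\sum_{j=0}^{k}\binom{k}{j}^2\binom{2j}{j}x^j$ denote the Sun polynomials. Then (i) $\displaystyle \frac{1}{n}\sum_{k=0}^{n-1}(4k+3)g_k(x)\in\mathbb{Z}[x]$, i.e. every coefficient of the polynomial $\sum_{k=0}^{n-1}(4k+3)g_k(x)$ is divisible by $n$; (ii) $\displaystyle \sum_{k=0}^{n-1}(8k^2+12k+5)g_k(-1)\equiv 0\pmod{n}$.
   Context: The Sun polynomials are $g_k(x)=\sum_{j=0}^{k}\binom{k}{j}^2\binom{2j}{j}x^j$ for integers $k\ge 0$. *)

theory Defs
  imports "HOL-Computational_Algebra.Polynomial"
begin

definition sun_poly :: "nat \<Rightarrow> int poly" where
  "sun_poly k = (\<Sum>j\<le>k. monom (int ((k choose j)^2 * ((2*j) choose j))) j)"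

end

theory Submission
  imports Defs
begin

declare binomial_Suc_Suc[simp del]

definition cat :: "nat \<Rightarrow> nat" where "cat j = (2*j choose j) - (2*j choose Suc j)"

lemma binom_shift: "Suc k * (n choose Suc k) = (n - k) * (n choose k)"
  using binomial_absorption[of k n] binomial_absorb_comp[of n k] by simp

lemma cat_mult: "Suc j * cat j = (2*j choose j)"
proof -
  have "Suc j * (2*j choose Suc j) = j * (2*j choose j)"
    using binom_shift[of j "2*j"] by simp
  then show ?thesis unfolding cat_def
    by (simp add: diff_mult_distrib2)
qed

lemma cat2: "(2*Suc j choose Suc j) = 2*(2*j+1)*cat j"
proof -
  have a: "Suc j * (Suc (2*j+1) choose Suc j) = Suc (2*j+1) * ((2*j+1) choose j)"
    by (rule Suc_times_binomial)
  have b: "Suc j * ((2*j+1) choose Suc j) = (2*j+1 - j) * ((2*j+1) choose j)"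
    by (rule binom_shift)
  have c: "((2*j+1) choose j) = ((2*j+1) choose Suc j)"
    using binomial_symmetric[of j "2*j+1"] by (simp del: binomial_Suc_Suc)
  have d: "Suc (2*j) * ((2*j) choose j) = ((Suc (2*j)) choose Suc j) * Suc j"
    by (rule Suc_times_binomial_eq)
  have e: "2*Suc j = Suc (2*j+1)" by simp
  have "Suc j * Suc j * (2*Suc j choose Suc j) = Suc j * Suc j * (2*(2*j+1)*cat j)"
  proof -
    have "Suc j * Suc j * (2*Suc j choose Suc j) = Suc j * (Suc j * (Suc (2*j+1) choose Suc j))"
      by (simp only: e mult.assoc)
    also have "\<dots> = Suc j * (Suc (2*j+1) * ((2*j+1) choose j))" by (simp only: a)
    also have "\<dots> = 2 * Suc j * (Suc j * ((2*j+1) choose Suc j))" by (simp only: c) (simp add: algebra_simps del: binomial_Suc_Suc)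
    also have "\<dots> = 2 * Suc j * (Suc j * ((Suc (2*j)) choose Suc j))" by simp
    also have "\<dots> = 2 * Suc j * ((2*j+1) * (2*j choose j))" using d by (simp add: algebra_simps del: binomial_Suc_Suc)
    also have "\<dots> = Suc j * Suc j * (2*(2*j+1)*cat j)" unfolding cat_mult[of j, symmetric] by (simp add: algebra_simps del: binomial_Suc_Suc)
    finally show ?thesis .
  qed
  moreover have "Suc j * Suc j \<noteq> 0" by simp
  ultimately show ?thesis using mult_left_cancel by blast
qed

lemma poly_sun: "poly (sun_poly N) (-1::int) = (\<Sum>j\<le>N. int ((N choose j)^2 * (2*j choose j)) * (-1)^j)"
  by (simp add: sun_poly_def poly_sum poly_monom)

definition TT :: "nat \<Rightarrow> int" where
  "TT N = (\<Sum>j\<le>N. (-1)^j * int (cat j) * (int N - int j)^2 * (int (N choose j))^2 * (2*int N + 5*int j + 3))"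

definition uu :: "nat \<Rightarrow> nat \<Rightarrow> int" where
  "uu N j = (-1)^j * int (2*j choose j) * (int j)^2 * (int (N choose j))^2"

lemma poly_id: "(s::int)*c*(x+1)^2*b^2*(2*x+5*y+5) - s*c*(x-y)^2*b^2*(2*x+5*y+3)
   - (8*x^2+12*x+5)*(b^2*((y+1)*c)*s)
   = (-s)*(2*(2*y+1)*c)*((x-y)*b)^2 - s*((y+1)*c)*y^2*b^2"
  by (simp add: algebra_simps power2_eq_square)

lemma step_term:
  assumes "j \<le> N"
  shows "(-1)^j * int (cat j) * (int N + 1)^2 * (int (N choose j))^2 * (2*int N + 5*int j + 5)
      - (-1)^j * int (cat j) * (int N - int j)^2 * (int (N choose j))^2 * (2*int N + 5*int j + 3)
      - (8*int N^2 + 12*int N + 5) * (int ((N choose j)^2 * (2*j choose j)) * (-1)^j)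
      = uu N (Suc j) - uu N j"
proof -
  have e1: "int (2*Suc j choose Suc j) = 2*(2*int j+1)*int (cat j)"
  proof -
    have "int (2*Suc j choose Suc j) = int (2*(2*j+1)*cat j)" by (simp only: cat2)
    then show ?thesis by (simp add: algebra_simps del: binomial_Suc_Suc)
  qed
  have e2: "(int j + 1) * int (N choose Suc j) = (int N - int j) * int (N choose j)"
  proof -
    have "Suc j * (N choose Suc j) = (N - j) * (N choose j)" by (rule binom_shift)
    then have "int (Suc j * (N choose Suc j)) = int ((N - j) * (N choose j))" by simp
    then show ?thesis using assms by (simp add: of_nat_diff algebra_simps)
  qed
  have e3: "int (2*j choose j) = (int j + 1) * int (cat j)"
    using cat_mult[of j] by (metis of_nat_Suc of_nat_mult add.commute)
  have u1: "uu N (Suc j) = (-((-1)^j)) * (2*(2*int j+1)*int (cat j)) * ((int N - int j) * int (N choose j))^2"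
  proof -
    have "uu N (Suc j) = (-((-1)^j)) * int (2*Suc j choose Suc j) * ((int j + 1) * int (N choose Suc j))^2"
      unfolding uu_def by (simp add: power_mult_distrib power2_eq_square algebra_simps)
    then show ?thesis using e1 e2 by simp
  qed
  have u0: "uu N j = (-1)^j * ((int j + 1) * int (cat j)) * (int j)^2 * (int (N choose j))^2"
    unfolding uu_def e3 by simp
  show ?thesis
    unfolding u1 u0 of_nat_mult e3 of_nat_power
    using poly_id[of "(-1)^j" "int (cat j)" "int N" "int (N choose j)" "int j"]
    by (simp add: algebra_simps)
qed

lemma TT_Suc: "TT (Suc N) = (\<Sum>j\<le>N. (-1)^j * int (cat j) * (int N + 1)^2 * (int (N choose j))^2 * (2*int N + 5*int j + 5))"
proof -
  have "TT (Suc N) = (\<Sum>j\<le>N. (-1)^j * int (cat j) * (int (Suc N) - int j)^2 * (int (Suc N choose j))^2 * (2*int (Suc N) + 5*int j + 3))"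
    unfolding TT_def by simp
  also have "\<dots> = (\<Sum>j\<le>N. (-1)^j * int (cat j) * (int N + 1)^2 * (int (N choose j))^2 * (2*int N + 5*int j + 5))"
  proof (rule sum.cong[OF refl])
    fix j assume j: "j \<in> {..N}"
    have a: "(Suc N - j) * (Suc N choose j) = Suc N * (N choose j)"
      using binomial_absorb_comp[of "Suc N" j] by simp
    have b: "(int (Suc N) - int j) * int (Suc N choose j) = (int N + 1) * int (N choose j)"
    proof -
      have d: "int (Suc N - j) = int (Suc N) - int j" using j by (simp add: of_nat_diff)
      have "(int (Suc N) - int j) * int (Suc N choose j) = int ((Suc N - j) * (Suc N choose j))"
        unfolding of_nat_mult d ..
      also have "\<dots> = int (Suc N * (N choose j))" using a by simp
      finally show ?thesis by (simp add: algebra_simps)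
    qed
    have c: "(int (Suc N) - int j)^2 * (int (Suc N choose j))^2 = (int N + 1)^2 * (int (N choose j))^2"
      using b by (metis power_mult_distrib)
    show "(-1)^j * int (cat j) * (int (Suc N) - int j)^2 * (int (Suc N choose j))^2 * (2*int (Suc N) + 5*int j + 3)
        = (-1)^j * int (cat j) * (int N + 1)^2 * (int (N choose j))^2 * (2*int N + 5*int j + 5)"
      using c by (simp add: algebra_simps)
  qed
  finally show ?thesis .
qed

lemma main2: "(\<Sum>k<N. int (8*k^2+12*k+5) * poly (sun_poly k) (-1)) = TT N"
proof (induction N)
  case 0
  then show ?case by (simp add: TT_def)
next
  case (Suc N)
  have "TT (Suc N) - TT N - int (8*N^2+12*N+5) * poly (sun_poly N) (-1)
      = (\<Sum>j\<le>N. uu N (Suc j) - uu N j)"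
    unfolding TT_Suc
    unfolding TT_def poly_sun sum_distrib_left sum_subtractf[symmetric]
    by (rule sum.cong[OF refl]) (use step_term in auto)
  also have "\<dots> = 0"
    using sum_lessThan_telescope[of "uu N" "Suc N"] by (simp add: lessThan_Suc_atMost uu_def)
  finally show ?case using Suc.IH by simp
qed

lemma part2: "int n dvd (\<Sum>k<n. int (8*k^2 + 12*k + 5) * poly (sun_poly k) (-1))"
proof -
  have "(int n)^2 dvd TT n"
    unfolding TT_def
  proof (rule dvd_sum)
    fix j assume j: "j \<in> {..n}"
    have a: "(n - j) * (n choose j) = n * ((n-1) choose j)" by (rule binomial_absorb_comp)
    have "(int n - int j) * int (n choose j) = int n * int ((n-1) choose j)"
    proof -
      have d: "int (n - j) = int n - int j" using j by (simp add: of_nat_diff)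
      have "(int n - int j) * int (n choose j) = int ((n - j) * (n choose j))"
        unfolding of_nat_mult d ..
      also have "\<dots> = int (n * ((n-1) choose j))" using a by simp
      finally show ?thesis by simp
    qed
    then have "(int n - int j)^2 * (int (n choose j))^2 = (int n)^2 * (int ((n-1) choose j))^2"
      by (metis power_mult_distrib)
    then show "(int n)^2 dvd (-1)^j * int (cat j) * (int n - int j)^2 * (int (n choose j))^2 * (2*int n + 5*int j + 3)"
      by (metis dvd_mult dvd_mult2 dvd_triv_left mult.assoc)
  qed
  then show ?thesis unfolding main2 by (metis dvd_power_le dvd_refl one_le_numeral dvd_trans dvd_triv_left power2_eq_square)
qed

lemma L1: "(k choose j)^2 = (\<Sum>i\<le>j. (j choose i) * ((j+i) choose i) * (k choose (j+i)))"
proof (cases "j \<le> k")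
  case False
  then show ?thesis by (simp add: binomial_eq_0)
next
  case True
  define r where "r = k - j"
  have kr: "k = j + r" using True r_def by simp
  have v: "(\<Sum>i\<le>j. (j choose i) * (r choose (j - i))) = (j + r) choose j"
    by (rule vandermonde)
  have "(\<Sum>i\<le>j. (j choose i) * (r choose (j - i))) = (\<Sum>i\<le>j. (j choose (j - i)) * (r choose i))"
    by (rule sum.reindex_bij_witness[where i="\<lambda>i. j - i" and j="\<lambda>i. j - i"]) (simp_all add: diff_diff_cancel)
  also have "\<dots> = (\<Sum>i\<le>j. (j choose i) * (r choose i))"
    by (rule sum.cong[OF refl]) (metis atMost_iff binomial_symmetric)
  finally have kj: "(k choose j) = (\<Sum>i\<le>j. (j choose i) * (r choose i))" using v kr by simp
  have "(k choose j)^2 = (\<Sum>i\<le>j. (j choose i) * ((k choose j) * (r choose i)))"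
    unfolding power2_eq_square by (subst (2) kj) (simp add: sum_distrib_left mult.left_commute)
  also have "\<dots> = (\<Sum>i\<le>j. (j choose i) * ((j+i) choose i) * (k choose (j+i)))"
  proof (rule sum.cong[OF refl])
    fix i assume i: "i \<in> {..j}"
    have "(k choose j) * (r choose i) = ((j+i) choose i) * (k choose (j+i))"
    proof (cases "j + i \<le> k")
      case True
      have "(k choose (j+i)) * ((j+i) choose j) = (k choose j) * ((k - j) choose (j + i - j))"
        by (rule choose_mult) (use True in auto)
      moreover have "((j+i) choose j) = ((j+i) choose i)"
        using binomial_symmetric[of j "j+i"] by simp
      ultimately show ?thesis using r_def by (simp add: algebra_simps)
    next
      case False
      then have "r < i" using kr by simp
      then show ?thesis using False by (simp add: binomial_eq_0)
    qed
    then show "(j choose i) * ((k choose j) * (r choose i)) = (j choose i) * ((j+i) choose i) * (k choose (j+i))"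
      by (simp add: algebra_simps)
  qed
  finally show ?thesis .
qed

lemma L2: "(4*n+3) * (n choose m) = 4*(m+1)*(n choose (m+1)) + (4*m+3)*(n choose m)"
proof (cases "m \<le> n")
  case True
  have "Suc m * (n choose Suc m) = (n - m) * (n choose m)" by (rule binom_shift)
  then have "4*(m+1)*(n choose (m+1)) = 4*(n-m)*(n choose m)"
    by (metis Suc_eq_plus1 mult.assoc)
  then show ?thesis using True by (simp add: algebra_simps diff_mult_distrib)
next
  case False
  then show ?thesis by (simp add: binomial_eq_0)
qed

definition ff :: "nat \<Rightarrow> nat \<Rightarrow> nat" where
  "ff j i = (2*j choose j) * (j choose i) * ((j+i) choose i)"

definition cc :: "nat \<Rightarrow> nat \<Rightarrow> nat" where
  "cc j i = cat j * ((j+i) choose i) * ((j+1) choose i) + ((2*j+2) choose (j+1+i)) * ((j+i) choose i)^2"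

lemma K0: "(4*j+3) * ff j 0 = (j+1) * cc j 0"
proof -
  have a: "((2*j+2) choose (j+1)) = 2*(2*j+1)*cat j" using cat2[of j] by simp
  have "(j+1) * cc j 0 = (j+1) * cat j * (4*j+3)"
    unfolding cc_def using a by (simp add: algebra_simps)
  also have "\<dots> = (4*j+3) * (2*j choose j)" using cat_mult[of j] by (simp add: algebra_simps)
  finally show ?thesis by (simp add: ff_def)
qed

lemma K1_lt:
  assumes ij: "i < j"
  shows "(4*(j+Suc i)+3) * ff j (Suc i) + 4*(j+i+1) * ff j i = (j+Suc i+1) * cc j (Suc i)"
proof -
  define x where "x = real (j choose i)"
  define y where "y = real ((j+i) choose i)"
  define z where "z = real (2*j choose j)"
  define t where "t = real (cat j)"
  define X1 where "X1 = real (j choose Suc i)"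
  define Y1 where "Y1 = real ((j+Suc i) choose Suc i)"
  define W where "W = real ((j+1) choose Suc i)"
  define V where "V = real ((j+i+2) choose Suc i)"
  define U where "U = real ((2*j+2) choose (j+1+Suc i))"
  define Z2 where "Z2 = real ((2*j+2) choose (j+1))"
  have r1: "real (Suc i) * X1 = (real j - real i) * x"
  proof -
    have "Suc i * (j choose Suc i) = (j - i) * (j choose i)" by (rule binom_shift)
    then have "real (Suc i * (j choose Suc i)) = real ((j - i) * (j choose i))" by simp
    then show ?thesis unfolding X1_def x_def using ij by (simp add: of_nat_diff algebra_simps)
  qed
  have r2: "real (Suc i) * Y1 = real (j+i+1) * y"
  proof -
    have "Suc i * (Suc (j+i) choose Suc i) = Suc (j+i) * ((j+i) choose i)" by (rule Suc_times_binomial)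
    then have "real (Suc i * (Suc (j+i) choose Suc i)) = real (Suc (j+i) * ((j+i) choose i))" by simp
    then show ?thesis unfolding Y1_def y_def by (simp add: algebra_simps)
  qed
  have r3: "real (Suc i) * W = real (j+1) * x"
  proof -
    have "Suc i * (Suc j choose Suc i) = Suc j * (j choose i)" by (rule Suc_times_binomial)
    then have "real (Suc i * (Suc j choose Suc i)) = real (Suc j * (j choose i))" by simp
    then show ?thesis unfolding W_def x_def by (simp add: algebra_simps)
  qed
  have r4: "U * V = Z2 * W"
  proof -
    have "((2*j+2) choose (j+i+2)) * ((j+i+2) choose (j+1)) = ((2*j+2) choose (j+1)) * ((2*j+2 - (j+1)) choose (j+i+2 - (j+1)))"
      by (rule choose_mult) (use ij in auto)
    moreover have "((j+i+2) choose (j+1)) = ((j+i+2) choose Suc i)"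
      using binomial_symmetric[of "j+1" "j+i+2"] by simp
    moreover have "2*j+2 - (j+1) = j+1" "j+i+2 - (j+1) = Suc i" by auto
    ultimately have "((2*j+2) choose (j+i+2)) * ((j+i+2) choose Suc i) = ((2*j+2) choose (j+1)) * ((j+1) choose Suc i)"
      by simp
    then have "real (((2*j+2) choose (j+i+2)) * ((j+i+2) choose Suc i)) = real (((2*j+2) choose (j+1)) * ((j+1) choose Suc i))"
      by (simp only:)
    then show ?thesis unfolding U_def V_def Z2_def W_def by (simp add: add.commute add.left_commute)
  qed
  have r5: "real (j+1) * V = real (j+i+2) * Y1"
  proof -
    have "Suc j * (Suc (j+i+1) choose Suc j) = Suc (j+i+1) * ((j+i+1) choose j)" by (rule Suc_times_binomial)
    moreover have "(Suc (j+i+1) choose Suc j) = ((j+i+2) choose Suc i)"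
      using binomial_symmetric[of "Suc j" "Suc (j+i+1)"] by simp
    moreover have "((j+i+1) choose j) = ((j+Suc i) choose Suc i)"
      using binomial_symmetric[of j "j+i+1"] by simp
    ultimately have "Suc j * ((j+i+2) choose Suc i) = Suc (j+i+1) * ((j+Suc i) choose Suc i)" by simp
    then have "real (Suc j * ((j+i+2) choose Suc i)) = real (Suc (j+i+1) * ((j+Suc i) choose Suc i))" by (simp only:)
    then show ?thesis unfolding V_def Y1_def by (simp add: algebra_simps)
  qed
  have r6: "Z2 = 2*(2*real j+1)*t"
  proof -
    have "((2*j+2) choose (j+1)) = 2*(2*j+1)*cat j" using cat2[of j] by simp
    then show ?thesis unfolding Z2_def t_def by (simp add: algebra_simps)
  qed
  have r7: "z = (real j + 1) * t"
  proof -
    have "real (Suc j * cat j) = real (2*j choose j)" using cat_mult[of j] by simp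
    then show ?thesis unfolding z_def t_def by (simp add: algebra_simps)
  qed
  have r1': "(real i + 1) * X1 = (real j - real i) * x" using r1 by (simp add: add.commute add.left_commute)
  have r2': "(real i + 1) * Y1 = (real j + real i + 1) * y" using r2 by (simp add: add.commute add.left_commute)
  have r3': "(real i + 1) * W = (real j + 1) * x" using r3 by (simp add: add.commute add.left_commute)
  have r5': "(real j + real i + 2) * Y1 = (real j + 1) * V" using r5 by (simp add: add.commute add.left_commute)
  have R: "(real j + real i + 2) * (t * Y1 * W + U * Y1^2)
      = W * Y1 * t * ((real j + real i + 2) + 2*(real j + 1)*(2*real j + 1))"
  proof -
    have "(real j + real i + 2) * (U * Y1^2) = U * Y1 * ((real j + real i + 2) * Y1)"
      by (simp add: power2_eq_square algebra_simps)
    also have "\<dots> = (real j + 1) * Y1 * (U * V)" unfolding r5' by (simp add: algebra_simps)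
    also have "\<dots> = (real j + 1) * Y1 * W * (2*(2*real j+1)*t)" unfolding r4 r6 by (simp add: algebra_simps)
    finally show ?thesis by (simp add: algebra_simps)
  qed
  have A: "(real i + 1)^2 * ((4*(real j + real i + 1)+3) * (z * X1 * Y1) + 4*(real j+real i+1) * (z * x * y))
      = (4*(real j + real i + 1)+3) * z * ((real i + 1) * X1) * ((real i + 1) * Y1) + 4*(real j+real i+1) * (z * x * y) * (real i + 1)^2"
    by (simp add: power2_eq_square algebra_simps)
  also have "\<dots> = (4*(real j + real i + 1)+3) * z * ((real j - real i) * x) * ((real j + real i + 1) * y) + 4*(real j+real i+1) * (z * x * y) * (real i + 1)^2"
    unfolding r1' r2' ..
  also have "\<dots> = (real j + 1) * t * x * y * (real j + real i + 1) * (4*(real j)^2 + 7*real j + real i + 4)"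
    unfolding r7 by (simp add: power2_eq_square algebra_simps)
  finally have A': "(real i + 1)^2 * ((4*(real j + real i + 1)+3) * (z * X1 * Y1) + 4*(real j+real i+1) * (z * x * y))
     = (real j + 1) * t * x * y * (real j + real i + 1) * (4*(real j)^2 + 7*real j + real i + 4)" .
  have B: "(real i + 1)^2 * ((real j + real i + 2) * (t * Y1 * W + U * Y1^2))
      = ((real i + 1) * W) * ((real i + 1) * Y1) * t * ((real j + real i + 2) + 2*(real j + 1)*(2*real j + 1))"
    unfolding R by (simp add: power2_eq_square algebra_simps)
  also have "\<dots> = (real j + 1) * t * x * y * (real j + real i + 1) * (4*(real j)^2 + 7*real j + real i + 4)"
    unfolding r3' r2' by (simp add: power2_eq_square algebra_simps)
  finally have B': "(real i + 1)^2 * ((real j + real i + 2) * (t * Y1 * W + U * Y1^2))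
     = (real j + 1) * t * x * y * (real j + real i + 1) * (4*(real j)^2 + 7*real j + real i + 4)" .
  have goal: "(4*(real j + real i + 1)+3) * (z * X1 * Y1) + 4*(real j+real i+1) * (z * x * y)
      = (real j + real i + 2) * (t * Y1 * W + U * Y1^2)"
  proof -
    have "(real i + 1)^2 \<noteq> 0" by simp
    then show ?thesis using A' B' by (metis mult_left_cancel)
  qed
  have "real ((4*(j+Suc i)+3) * ff j (Suc i) + 4*(j+i+1) * ff j i) = real ((j+Suc i+1) * cc j (Suc i))"
    using goal unfolding ff_def cc_def x_def y_def z_def t_def X1_def Y1_def W_def U_def
    by (simp add: algebra_simps)
  then show ?thesis by (simp only: of_nat_eq_iff)
qed

lemma K1_eq:
  "(4*(j+Suc j)+3) * ff j (Suc j) + 4*(j+j+1) * ff j j = (j+Suc j+1) * cc j (Suc j)"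
proof -
  define z where "z = (2*j choose j)"
  define w where "w = (Suc (2*j) choose Suc j)"
  have jj: "j + Suc j = Suc (2*j)" by simp
  define t where "t = cat j"
  have hw: "(j+1) * w = (2*j+1) * z"
    using Suc_times_binomial_eq[of "2*j" j] unfolding w_def z_def by (simp only: mult.commute Suc_eq_plus1)
  have hz: "z = (j+1) * t" using cat_mult[of j] unfolding z_def t_def by simp
  have l: "ff j (Suc j) = 0" "ff j j = z * z" unfolding ff_def z_def by (simp_all add: binomial_eq_0 mult_2)
  have c: "cc j (Suc j) = t * w + w * w"
  proof -
    have "(2*j+2) choose (j+1+Suc j) = 1" by (simp add: mult_2)
    then show ?thesis unfolding cc_def t_def w_def jj by (simp add: power2_eq_square)
  qed
  have "(j+1)*(j+1)*((j+Suc j+1) * cc j (Suc j)) = (2*j+2)*(((j+1)*t)*((j+1)*w) + ((j+1)*w)*((j+1)*w))"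
    unfolding c by (simp add: algebra_simps)
  also have "\<dots> = (2*j+2)*(z*((2*j+1)*z) + ((2*j+1)*z)*((2*j+1)*z))" unfolding hw hz[symmetric] ..
  also have "\<dots> = (j+1)*(j+1)*((4*(j+Suc j)+3) * ff j (Suc j) + 4*(j+j+1) * ff j j)"
    unfolding l by (simp add: algebra_simps)
  finally have fin: "(j+1)*(j+1)*((j+Suc j+1) * cc j (Suc j)) = (j+1)*(j+1)*((4*(j+Suc j)+3) * ff j (Suc j) + 4*(j+j+1) * ff j j)" .
  have "(j+1)*(j+1) \<noteq> (0::nat)" by simp
  then show ?thesis using fin mult_left_cancel by metis
qed

lemma K1_gt:
  assumes "j < i"
  shows "(4*(j+Suc i)+3) * ff j (Suc i) + 4*(j+i+1) * ff j i = (j+Suc i+1) * cc j (Suc i)"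
  using assms unfolding ff_def cc_def by (simp add: binomial_eq_0)

lemma K1: "(4*(j+Suc i)+3) * ff j (Suc i) + 4*(j+i+1) * ff j i = (j+Suc i+1) * cc j (Suc i)"
proof -
  consider "i < j" | "i = j" | "j < i" by linarith
  then show ?thesis
  proof cases
    case 1 then show ?thesis by (rule K1_lt)
  next
    case 2 then show ?thesis using K1_eq[of j] by simp
  next
    case 3 then show ?thesis by (rule K1_gt)
  qed
qed

lemma ff_Suc_j: "ff j (Suc j) = 0" unfolding ff_def by (simp add: binomial_eq_0)

lemma Q: "(2*j choose j) * ((4*n+3) * (n choose j)^2) = (\<Sum>i\<le>Suc j. (j+i+1) * cc j i * (n choose (j+i)))"
proof -
  define A where "A i = (4*(j+i)+3) * ff j i * (n choose (j+i))" for i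
  define B where "B i = 4*(j+i+1) * ff j i * (n choose (j+Suc i))" for i
  have "(2*j choose j) * ((4*n+3) * (n choose j)^2) = (\<Sum>i\<le>j. ff j i * ((4*n+3) * (n choose (j+i))))"
    unfolding L1[of n j] sum_distrib_left ff_def by (rule sum.cong[OF refl]) (simp add: algebra_simps)
  also have "\<dots> = (\<Sum>i\<le>j. B i + A i)"
  proof (rule sum.cong[OF refl])
    fix i
    have "(4*n+3)*(n choose (j+i)) = 4*((j+i)+1)*(n choose ((j+i)+1)) + (4*(j+i)+3)*(n choose (j+i))"
      by (rule L2)
    then have "ff j i * ((4*n+3) * (n choose (j+i))) = ff j i * (4*((j+i)+1)*(n choose ((j+i)+1)) + (4*(j+i)+3)*(n choose (j+i)))"
      by (simp only:)
    also have "\<dots> = B i + A i" unfolding A_def B_def by (simp add: algebra_simps)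
    finally show "ff j i * ((4*n+3) * (n choose (j+i))) = B i + A i" .
  qed
  also have "\<dots> = (\<Sum>i\<le>j. B i) + (\<Sum>i\<le>j. A i)" by (simp add: sum.distrib)
  also have "(\<Sum>i\<le>j. A i) = A 0 + (\<Sum>i\<le>j. A (Suc i))"
  proof -
    have "(\<Sum>i\<le>j. A i) = A 0 + (\<Sum>i<j. A (Suc i))" by (rule sum.atMost_shift)
    moreover have "(\<Sum>i\<le>j. A (Suc i)) = (\<Sum>i<j. A (Suc i))"
      using ff_Suc_j[of j] by (simp add: lessThan_Suc_atMost[symmetric] A_def)
    ultimately show ?thesis by simp
  qed
  finally have lhs: "(2*j choose j) * ((4*n+3) * (n choose j)^2) = A 0 + (\<Sum>i\<le>j. A (Suc i) + B i)"
    by (simp add: sum.distrib)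
  have "(\<Sum>i\<le>Suc j. (j+i+1) * cc j i * (n choose (j+i)))
      = (j+0+1) * cc j 0 * (n choose (j+0)) + (\<Sum>i\<le>j. (j+Suc i+1) * cc j (Suc i) * (n choose (j+Suc i)))"
    by (rule sum.atMost_Suc_shift)
  also have "\<dots> = A 0 + (\<Sum>i\<le>j. A (Suc i) + B i)"
  proof -
    have "(j+0+1) * cc j 0 * (n choose (j+0)) = A 0"
      unfolding A_def using K0[of j] by (simp add: algebra_simps)
    moreover have "(\<Sum>i\<le>j. (j+Suc i+1) * cc j (Suc i) * (n choose (j+Suc i))) = (\<Sum>i\<le>j. A (Suc i) + B i)"
    proof (rule sum.cong[OF refl])
      fix i
      have "(j+Suc i+1) * cc j (Suc i) * (n choose (j+Suc i)) = ((4*(j+Suc i)+3) * ff j (Suc i) + 4*(j+i+1) * ff j i) * (n choose (j+Suc i))"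
        by (simp only: K1)
      then show "(j+Suc i+1) * cc j (Suc i) * (n choose (j+Suc i)) = A (Suc i) + B i"
        unfolding A_def B_def by (simp add: algebra_simps)
    qed
    ultimately show ?thesis by simp
  qed
  finally show ?thesis using lhs by simp
qed

lemma P: "(2*j choose j) * (\<Sum>k<n. (4*k+3) * (k choose j)^2) = (\<Sum>i\<le>Suc j. (j+i+1) * cc j i * (n choose (j+i+1)))"
proof (induction n)
  case 0
  then show ?case by simp
next
  case (Suc n)
  have "(2*j choose j) * (\<Sum>k<Suc n. (4*k+3) * (k choose j)^2)
      = (2*j choose j) * (\<Sum>k<n. (4*k+3) * (k choose j)^2) + (2*j choose j) * ((4*n+3) * (n choose j)^2)"
    by (simp add: algebra_simps)
  also have "\<dots> = (\<Sum>i\<le>Suc j. (j+i+1) * cc j i * (n choose (j+i+1))) + (\<Sum>i\<le>Suc j. (j+i+1) * cc j i * (n choose (j+i)))"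
    unfolding Suc.IH Q ..
  also have "\<dots> = (\<Sum>i\<le>Suc j. (j+i+1) * cc j i * (Suc n choose (j+i+1)))"
    unfolding sum.distrib[symmetric]
    by (rule sum.cong[OF refl]) (simp add: binomial_Suc_Suc algebra_simps)
  finally show ?case .
qed

lemma part1: "n dvd (\<Sum>k<n. (4*k+3) * ((k choose j)^2 * (2*j choose j)))"
proof -
  have "(\<Sum>k<n. (4*k+3) * ((k choose j)^2 * (2*j choose j))) = (2*j choose j) * (\<Sum>k<n. (4*k+3) * (k choose j)^2)"
    by (simp add: sum_distrib_left algebra_simps)
  also have "\<dots> = (\<Sum>i\<le>Suc j. (j+i+1) * cc j i * (n choose (j+i+1)))" by (rule P)
  finally have e: "(\<Sum>k<n. (4*k+3) * ((k choose j)^2 * (2*j choose j))) = \<dots>" .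
  show ?thesis unfolding e
  proof (rule dvd_sum)
    fix i
    have "Suc (j+i) * (n choose Suc (j+i)) = n * ((n - 1) choose (j+i))" by (rule binomial_absorption)
    moreover have "(j+i+1) * cc j i * (n choose (j+i+1)) = cc j i * (Suc (j+i) * (n choose Suc (j+i)))"
      by (simp add: algebra_simps)
    ultimately have "(j+i+1) * cc j i * (n choose (j+i+1)) = n * (cc j i * ((n - 1) choose (j+i)))"
      by (simp only: mult.left_commute)
    then show "n dvd (j+i+1) * cc j i * (n choose (j+i+1))" by simp
  qed
qed

lemma coeff_sun: "coeff (sun_poly k) i = int ((k choose i)^2 * (2*i choose i))"
proof -
  have "coeff (sun_poly k) i = (\<Sum>j\<le>k. (if j = i then int ((k choose j)^2 * (2*j choose j)) else 0))"
    unfolding sun_poly_def coeff_sum coeff_monom ..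
  also have "\<dots> = (if i \<in> {..k} then int ((k choose i)^2 * (2*i choose i)) else 0)"
    by (rule sum.delta) simp
  also have "\<dots> = int ((k choose i)^2 * (2*i choose i))"
    by (auto simp: binomial_eq_0)
  finally show ?thesis .
qed

theorem theorem1:
  fixes n :: nat
  assumes "n > 0"
  shows "(\<forall>i. int n dvd coeff (\<Sum>k<n. smult (int (4*k+3)) (sun_poly k)) i)
       \<and> int n dvd (\<Sum>k<n. int (8*k^2 + 12*k + 5) * poly (sun_poly k) (-1))"
proof
  show "\<forall>i. int n dvd coeff (\<Sum>k<n. smult (int (4*k+3)) (sun_poly k)) i"
  proof
    fix i
    have "coeff (\<Sum>k<n. smult (int (4*k+3)) (sun_poly k)) i = int (\<Sum>k<n. (4*k+3) * ((k choose i)^2 * (2*i choose i)))"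
    proof -
      have "coeff (\<Sum>k<n. smult (int (4*k+3)) (sun_poly k)) i = (\<Sum>k<n. int (4*k+3) * int ((k choose i)^2 * (2*i choose i)))"
        unfolding coeff_sum coeff_smult coeff_sun ..
      also have "\<dots> = int (\<Sum>k<n. (4*k+3) * ((k choose i)^2 * (2*i choose i)))"
        by (simp only: of_nat_sum of_nat_mult)
      finally show ?thesis .
    qed
    then show "int n dvd coeff (\<Sum>k<n. smult (int (4*k+3)) (sun_poly k)) i"
      using part1[of n i] by (simp only: int_dvd_int_iff)
  qed
  show "int n dvd (\<Sum>k<n. int (8*k^2 + 12*k + 5) * poly (sun_poly k) (-1))" by (rule part2)
qed

end
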